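(* Let $\mathcal B=\{B_1,\dots,B_m\}$ be a partition of $n$ jobs with processing times $p_1,\dots,p_n$ into $m$ bags. Then $\mathcal B$ is a $\max\{2,\beta(\mathcal B)\}$-robust partition, where $\beta(\mathcal B)=\frac{\max_{B\in\mathcal B,|B|\ge2}p(B)}{\min_{B\in\mathcal B}p(B)}$.
   Context: Jobs $j\in[n]$ have processing times $p_j\ge0$; for a bag $B\subseteq[n]$, $p(B)=\sum_{j\in B}p_j$. For machines with speeds $s_1,\dots,s_m>0$, processing job $j$ on machine $i$ takes time $p_j/s_i$, and the makespan of an assignment is $\max_i(\text{total processing time on } i)/s_i$; $opt(\mathbf p,\mathbf s)$ denotes the minimum makespan over all assignments of the individual jobs to the machines. A partition $\mathcal B$ of the jobs into $m$ bags is $\gamma$-robust if for every speed vector $\mathbf s=(s_1,\dots,s_m)>0$ there is an assignment of the bags (each bag as a whole) to the $m$ machines with makespan at most $\gamma\cdot opt(\mathbf p,\mathbf s)$. *)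

theory Defs
  imports "HOL-Analysis.Analysis" "HOL-Library.Extended_Real"
begin

text \<open>Jobs are indexed by {..<n}, machines and bags by {..<m}.\<close>

definition psum :: "(nat \<Rightarrow> real) \<Rightarrow> nat set \<Rightarrow> real" where
  "psum p B = (\<Sum>j\<in>B. p j)"

text \<open>Makespan of a job assignment f (jobs to machines); loads are nonnegative,
  the 0 only matters for the degenerate case m = 0.\<close>
definition makespan :: "nat \<Rightarrow> nat \<Rightarrow> (nat \<Rightarrow> real) \<Rightarrow> (nat \<Rightarrow> real) \<Rightarrow> (nat \<Rightarrow> nat) \<Rightarrow> real" where
  "makespan n m p s f =
     Max (insert 0 ((\<lambda>i. (\<Sum>j\<in>{j. j < n \<and> f j = i}. p j) / s i) ` {..<m}))"

definition opt :: "nat \<Rightarrow> nat \<Rightarrow> (nat \<Rightarrow> real) \<Rightarrow> (nat \<Rightarrow> real) \<Rightarrow> real" where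
  "opt n m p s = Min (makespan n m p s ` ({..<n} \<rightarrow>\<^sub>E {..<m}))"

definition bag_makespan :: "nat \<Rightarrow> (nat \<Rightarrow> real) \<Rightarrow> (nat \<Rightarrow> nat set) \<Rightarrow> (nat \<Rightarrow> real) \<Rightarrow> (nat \<Rightarrow> nat) \<Rightarrow> real" where
  "bag_makespan m p B s g =
     Max (insert 0 ((\<lambda>i. (\<Sum>k\<in>{k. k < m \<and> g k = i}. psum p (B k)) / s i) ` {..<m}))"

definition is_partition :: "nat \<Rightarrow> nat \<Rightarrow> (nat \<Rightarrow> nat set) \<Rightarrow> bool" where
  "is_partition n m B \<longleftrightarrow>
     (\<Union>k<m. B k) = {..<n} \<and> (\<forall>k<m. \<forall>l<m. k \<noteq> l \<longrightarrow> B k \<inter> B l = {})"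

definition robust :: "nat \<Rightarrow> nat \<Rightarrow> (nat \<Rightarrow> real) \<Rightarrow> (nat \<Rightarrow> nat set) \<Rightarrow> ereal \<Rightarrow> bool" where
  "robust n m p B \<gamma> \<longleftrightarrow>
     (\<forall>s. (\<forall>i<m. s i > 0) \<longrightarrow>
        (\<exists>g \<in> {..<m} \<rightarrow>\<^sub>E {..<m}. ereal (bag_makespan m p B s g) \<le> \<gamma> * ereal (opt n m p s)))"

text \<open>Conventions: if there is no bag with >= 2 jobs, beta = 0 (so max{2,beta} = 2);
  if the minimum is 0, beta = infinity.\<close>
definition beta :: "nat \<Rightarrow> (nat \<Rightarrow> real) \<Rightarrow> (nat \<Rightarrow> nat set) \<Rightarrow> ereal" where
  "beta m p B =
     (let M = {k. k < m \<and> card (B k) \<ge> 2};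
          mn = Min (psum p ` B ` {..<m})
      in if M = {} then 0
         else if mn = 0 then \<infinity>
         else ereal (Max (psum p ` B ` M) / mn))"

end

theory Submission
  imports Defs
begin

context
  fixes n m :: nat and p :: "nat \<Rightarrow> real" and B :: "nat \<Rightarrow> nat set" and s :: "nat \<Rightarrow> real"
    and f :: "nat \<Rightarrow> nat" and T :: real
  assumes pnn: "\<forall>j<n. p j \<ge> 0" and part: "is_partition n m B" and spos: "\<forall>i<m. s i > 0"
    and fm: "\<forall>j<n. f j < m"
    and fT: "\<forall>i<m. (\<Sum>j\<in>{j. j<n \<and> f j = i}. p j) \<le> T * s i"
    and T0: "T \<ge> 0"
begin

lemma Bsub: "k<m \<Longrightarrow> B k \<subseteq> {..<n}"
  using part unfolding is_partition_def by blast

lemma Bfin: "k<m \<Longrightarrow> finite (B k)"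
  using Bsub finite_subset by blast

lemma psum_nn: "k<m \<Longrightarrow> psum p (B k) \<ge> 0"
  unfolding psum_def using Bsub pnn by (intro sum_nonneg) auto

lemma psum_union: "K \<subseteq> {..<m} \<Longrightarrow> (\<Sum>k\<in>K. psum p (B k)) = (\<Sum>j\<in>(\<Union>k\<in>K. B k). p j)"
  unfolding psum_def
  apply (subst sum.UNION_disjoint)
  using Bfin part finite_subset[of K "{..<m}"] unfolding is_partition_def
  by (auto simp: subset_iff disjoint_iff)

lemma total: "(\<Sum>k<m. psum p (B k)) = (\<Sum>j<n. p j)"
  using psum_union[of "{..<m}"] part unfolding is_partition_def by simp

lemma load_group: "(\<Sum>i\<in>I. (\<Sum>j\<in>{j. j<n \<and> f j = i}. p j)) = (\<Sum>j\<in>{j. j<n \<and> f j \<in> I}. p j)"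
  if "I \<subseteq> {..<m}" for I
proof -
  have "(\<Sum>i\<in>I. (\<Sum>j\<in>{j. j\<in>{j. j<n \<and> f j \<in> I} \<and> f j = i}. p j)) = (\<Sum>j\<in>{j. j<n \<and> f j \<in> I}. p j)"
    using that finite_subset[of I "{..<m}"] by (intro sum.group) auto
  moreover have "\<And>i. i \<in> I \<Longrightarrow> {j. j\<in>{j. j<n \<and> f j \<in> I} \<and> f j = i} = {j. j<n \<and> f j = i}" by auto
  ultimately show ?thesis by simp
qed

lemma volume: "(\<Sum>j<n. p j) \<le> T * (\<Sum>i<m. s i)"
proof -
  have "{j. j<n \<and> f j \<in> {..<m}} = {..<n}" using fm by auto
  then have "(\<Sum>j<n. p j) = (\<Sum>i<m. (\<Sum>j\<in>{j. j<n \<and> f j = i}. p j))"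
    using load_group[of "{..<m}"] by simp
  also have "\<dots> \<le> (\<Sum>i<m. T * s i)" using fT by (intro sum_mono) auto
  finally show ?thesis by (simp add: sum_distrib_left)
qed

lemma single: "j<n \<Longrightarrow> p j \<le> T * s (f j)"
proof -
  assume j: "j<n"
  have "p j = (\<Sum>j'\<in>{j}. p j')" by simp
  also have "\<dots> \<le> (\<Sum>j'\<in>{j'. j'<n \<and> f j' = f j}. p j')"
    using j pnn by (intro sum_mono2) auto
  also have "\<dots> \<le> T * s (f j)" using fT fm j by auto
  finally show ?thesis .
qed


context
  fixes \<gamma> :: real
  assumes g2: "\<gamma> \<ge> 2"
    and H: "\<forall>k<m. \<forall>l<m. card (B k) \<ge> 2 \<longrightarrow> psum p (B k) \<le> \<gamma> * psum p (B l)"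
begin

lemma step:
  assumes X: "X \<subseteq> {..<m}" "k \<in> X" and kmin: "\<forall>x\<in>X. psum p (B k) \<le> psum p (B x)"
   and up: "\<forall>x\<in>X. \<forall>y<m. y \<notin> X \<longrightarrow> psum p (B y) \<le> psum p (B x)"
   and gm: "\<forall>k'<m. g k' < m"
  shows "\<exists>i<m. (\<Sum>k'\<in>{k'. k'\<in>X-{k} \<and> g k' = i}. psum p (B k')) + psum p (B k) \<le> \<gamma> * T * s i"
proof (rule ccontr)
  define L where "L i = (\<Sum>k'\<in>{k'. k'\<in>X-{k} \<and> g k' = i}. psum p (B k'))" for i
  define b where "b = psum p (B k)"
  define Y where "Y = X - {k}"
  define Z where "Z = {..<m} - X"
  define VY where "VY = (\<Sum>k'\<in>Y. psum p (B k'))"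
  assume "\<not> ?thesis"
  then have neg: "\<forall>i<m. \<gamma> * T * s i < L i + b" unfolding L_def b_def by force
  have km: "k < m" using X by auto
  have finX: "finite X" using X finite_subset by blast
  have YX: "Y \<subseteq> {..<m}" using X unfolding Y_def by auto
  have finY: "finite Y" using finX unfolding Y_def by auto
  have b0: "b \<ge> 0" unfolding b_def using psum_nn km .
  have Lsum: "(\<Sum>i<m. L i) = VY"
    unfolding L_def VY_def Y_def[symmetric]
    using sum.group[of Y "{..<m}" g "\<lambda>k'. psum p (B k')"] finY YX gm by auto
  have Lnn: "L i \<ge> 0" for i
    unfolding L_def using X psum_nn by (intro sum_nonneg) auto
  have VY0: "VY \<ge> 0" unfolding VY_def using YX psum_nn by (intro sum_nonneg) auto
  have sumX: "(\<Sum>k'\<in>X. psum p (B k')) = VY + b"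
    unfolding VY_def b_def Y_def using sum.remove[OF finX X(2), of "\<lambda>k'. psum p (B k')"] by simp
  show False
  proof (cases "\<forall>l<m. b \<le> \<gamma> * psum p (B l)")
    case True
    define R where "R = (\<Sum>k'\<in>Z. psum p (B k'))"
    have P: "(\<Sum>j<n. p j) = VY + b + R"
    proof -
      have "(\<Sum>k<m. psum p (B k)) = (\<Sum>k'\<in>{..<m} - X. psum p (B k')) + (\<Sum>k'\<in>X. psum p (B k'))"
        using sum.subset_diff[OF X(1)] by simp
      then show ?thesis using total sumX unfolding R_def Z_def by simp
    qed
    have R: "\<gamma> * R \<ge> real (card Z) * b"
    proof -
      have "real (card Z) * b = (\<Sum>k'\<in>Z. b)" by simp
      also have "\<dots> \<le> (\<Sum>k'\<in>Z. \<gamma> * psum p (B k'))"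
        using True unfolding Z_def by (intro sum_mono) auto
      finally show ?thesis unfolding R_def by (simp add: sum_distrib_left)
    qed
    have VYb: "VY \<ge> real (card Y) * b"
    proof -
      have "real (card Y) * b = (\<Sum>k'\<in>Y. b)" by simp
      also have "\<dots> \<le> VY"
        unfolding VY_def b_def using kmin unfolding Y_def by (intro sum_mono) auto
      finally show ?thesis .
    qed
    have TS: "\<gamma> * (T * (\<Sum>i<m. s i)) < VY + real m * b"
    proof -
      have "\<gamma> * (T * (\<Sum>i<m. s i)) = (\<Sum>i<m. \<gamma> * T * s i)"
        by (simp add: sum_distrib_left mult.assoc)
      also have "\<dots> < (\<Sum>i<m. L i + b)"
        using neg km by (intro sum_strict_mono) auto
      also have "\<dots> = VY + real m * b" using Lsum by (simp add: sum.distrib)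
      finally show ?thesis .
    qed
    have cards: "real m = real (card Y) + 1 + real (card Z)"
    proof -
      have "card X > 0" using finX X(2) card_gt_0_iff by auto
      moreover have "card Y = card X - 1" unfolding Y_def using X(2) finX by (simp add: card_Diff_singleton)
      ultimately have "card X = card Y + 1" by arith
      moreover have "card Z = m - card X" unfolding Z_def using X(1) finX
        by (simp add: card_Diff_subset)
      moreover have "card X \<le> m" using X(1) card_mono[of "{..<m}" X] by simp
      ultimately show ?thesis by simp
    qed
    have "\<gamma> * (VY + b + R) \<le> \<gamma> * (T * (\<Sum>i<m. s i))"
      using volume P g2 by (intro mult_left_mono) auto
    moreover have "\<gamma> * VY \<ge> 2 * VY" using g2 VY0 by (intro mult_right_mono) auto
    moreover have "\<gamma> * b \<ge> 1 * b" using g2 b0 by (intro mult_right_mono) auto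
    moreover have "\<gamma> * (VY + b + R) = \<gamma> * VY + \<gamma> * b + \<gamma> * R" by (simp add: algebra_simps)
    moreover have "VY + real m * b = VY + real (card Y) * b + b + real (card Z) * b"
      using cards by (simp add: algebra_simps)
    ultimately show False using TS R VYb by linarith
  next
    case False
    then obtain l where l: "l < m" "\<gamma> * psum p (B l) < b" by (auto simp: not_le)
    have gl0: "\<gamma> * psum p (B l) \<ge> 0" using g2 psum_nn[OF l(1)] by simp
    have sing: "\<exists>j. j < n \<and> B x = {j}" if x: "x \<in> X" for x
    proof -
      have xm: "x < m" using x X by auto
      have bx: "b \<le> psum p (B x)" using kmin x unfolding b_def by auto
      have "\<not> card (B x) \<ge> 2" using H xm l bx by force
      moreover have "B x \<noteq> {}" using bx l gl0 unfolding psum_def by auto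
      moreover have "finite (B x)" using Bfin xm .
      ultimately have "card (B x) \<noteq> 0" "\<not> card (B x) \<ge> 2" by auto
      then have "card (B x) = 1" by arith
      then obtain j where "B x = {j}" by (auto simp: card_Suc_eq)
      then show ?thesis using Bsub[OF xm] by auto
    qed
    define S1 where "S1 = {i. i<m \<and> b \<le> T * s i}"
    have S1m: "S1 \<subseteq> {..<m}" unfolding S1_def by auto
    have J: "(\<Union>x\<in>X. B x) \<subseteq> {j. j<n \<and> f j \<in> S1}"
    proof
      fix j assume "j \<in> (\<Union>x\<in>X. B x)"
      then obtain x where x: "x \<in> X" "j \<in> B x" by auto
      obtain j' where j': "j' < n" "B x = {j'}" using sing[OF x(1)] by auto
      have "j = j'" using x j' by auto
      have "b \<le> psum p (B x)" using kmin x unfolding b_def by auto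
      then have "b \<le> p j" using j' \<open>j = j'\<close> unfolding psum_def by simp
      then have "b \<le> T * s (f j)" using single j' \<open>j = j'\<close> by force
      then show "j \<in> {j. j<n \<and> f j \<in> S1}" using fm j' \<open>j = j'\<close> unfolding S1_def by auto
    qed
    have "VY + b \<le> (\<Sum>j\<in>{j. j<n \<and> f j \<in> S1}. p j)"
    proof -
      have "VY + b = (\<Sum>j\<in>(\<Union>x\<in>X. B x). p j)" using sumX psum_union[OF X(1)] by simp
      also have "\<dots> \<le> (\<Sum>j\<in>{j. j<n \<and> f j \<in> S1}. p j)"
        using J pnn by (intro sum_mono2) auto
      finally show ?thesis .
    qed
    also have "\<dots> = (\<Sum>i\<in>S1. (\<Sum>j\<in>{j. j<n \<and> f j = i}. p j))"
      using load_group[OF S1m] by simp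
    also have "\<dots> \<le> (\<Sum>i\<in>S1. T * s i)" using fT S1m by (intro sum_mono) auto
    also have "\<dots> < (\<Sum>i\<in>S1. L i)"
    proof (rule sum_strict_mono)
      show "finite S1" using S1m finite_subset by blast
      obtain j0 where "j0 < n" "B k = {j0}" using sing[OF X(2)] by auto
      then have "j0 \<in> (\<Union>x\<in>X. B x)" using X by auto
      then show "S1 \<noteq> {}" using J by auto
      fix i assume i: "i \<in> S1"
      then have "b \<le> T * s i" "i < m" unfolding S1_def by auto
      moreover have "\<gamma> * (T * s i) \<ge> 2 * (T * s i)" using g2 b0 \<open>b \<le> T * s i\<close>
        by (intro mult_right_mono) auto
      ultimately show "T * s i < L i" using neg by (auto simp: mult.assoc)
    qed
    also have "\<dots> \<le> (\<Sum>i<m. L i)" using S1m Lnn by (intro sum_mono2) auto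
    finally show False using Lsum b0 by simp
  qed
qed


lemma build:
  "X \<subseteq> {..<m} \<Longrightarrow> (\<forall>x\<in>X. \<forall>y<m. y \<notin> X \<longrightarrow> psum p (B y) \<le> psum p (B x)) \<Longrightarrow>
   \<exists>g. (\<forall>k<m. g k < m) \<and> (\<forall>i<m. (\<Sum>k\<in>{k. k\<in>X \<and> g k = i}. psum p (B k)) \<le> \<gamma> * T * s i)"
proof (induct "card X" arbitrary: X)
  case 0
  then have "X = {}" using finite_subset[of X "{..<m}"] by auto
  moreover have "0 \<le> \<gamma> * T * s i" if "i<m" for i using g2 T0 spos that by auto
  ultimately show ?case by (intro exI[of _ "\<lambda>_. 0"]) auto
next
  case (Suc c X)
  have finX: "finite X" using Suc.prems finite_subset by blast
  have Xne: "X \<noteq> {}" using Suc.hyps(2) by auto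
  define k where "k = arg_min_on (\<lambda>x. psum p (B x)) X"
  have kX: "k \<in> X" unfolding k_def using arg_min_if_finite(1)[OF finX Xne] .
  have kmin: "\<forall>x\<in>X. psum p (B k) \<le> psum p (B x)"
    unfolding k_def using arg_min_if_finite(2)[OF finX Xne, of "\<lambda>x. psum p (B x)"] by (auto simp: not_less)
  define Y where "Y = X - {k}"
  have cY: "c = card Y" unfolding Y_def using Suc.hyps(2) kX finX by (simp add: card_Diff_singleton)
  have YU: "Y \<subseteq> {..<m}" using Suc.prems unfolding Y_def by auto
  have Yup: "\<forall>x\<in>Y. \<forall>y<m. y \<notin> Y \<longrightarrow> psum p (B y) \<le> psum p (B x)"
    using Suc.prems(2) kmin unfolding Y_def by auto
  obtain g where gm: "\<forall>k<m. g k < m"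
    and gL: "\<forall>i<m. (\<Sum>k\<in>{k. k\<in>Y \<and> g k = i}. psum p (B k)) \<le> \<gamma> * T * s i"
    using Suc.hyps(1)[OF cY YU Yup] by blast
  obtain i0 where i0: "i0 < m"
    "(\<Sum>k'\<in>{k'. k'\<in>X-{k} \<and> g k' = i0}. psum p (B k')) + psum p (B k) \<le> \<gamma> * T * s i0"
    using step[OF Suc.prems(1) kX kmin Suc.prems(2) gm] by blast
  define g' where "g' = g(k := i0)"
  have "\<forall>k<m. g' k < m" using gm i0 unfolding g'_def by auto
  moreover have "(\<Sum>k'\<in>{k'. k'\<in>X \<and> g' k' = i}. psum p (B k')) \<le> \<gamma> * T * s i" if i: "i<m" for i
  proof (cases "i = i0")
    case True
    have eq: "{k'. k'\<in>X \<and> g' k' = i} = insert k {k'. k'\<in>X-{k} \<and> g k' = i0}"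
      using kX True unfolding g'_def by auto
    have "finite {k'. k'\<in>X-{k} \<and> g k' = i0}" using finX by auto
    then show ?thesis unfolding eq using i0 True by (simp add: sum.insert add.commute)
  next
    case False
    have eq: "{k'. k'\<in>X \<and> g' k' = i} = {k'. k'\<in>Y \<and> g k' = i}"
      using kX False unfolding g'_def Y_def by auto
    show ?thesis unfolding eq using gL i by auto
  qed
  ultimately show ?case by blast
qed

lemma main_assign:
  "\<exists>g\<in>{..<m} \<rightarrow>\<^sub>E {..<m}. bag_makespan m p B s g \<le> \<gamma> * T"
proof -
  obtain g where gm: "\<forall>k<m. g k < m"
    and gL: "\<forall>i<m. (\<Sum>k\<in>{k. k\<in>{..<m} \<and> g k = i}. psum p (B k)) \<le> \<gamma> * T * s i"
    using build[of "{..<m}"] by auto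
  define g' where "g' = restrict g {..<m}"
  have "g' \<in> {..<m} \<rightarrow>\<^sub>E {..<m}" using gm unfolding g'_def by auto
  moreover have "bag_makespan m p B s g' \<le> \<gamma> * T"
    unfolding bag_makespan_def
  proof (rule Max.boundedI)
    show "finite (insert 0 ((\<lambda>i. (\<Sum>k\<in>{k. k < m \<and> g' k = i}. psum p (B k)) / s i) ` {..<m}))" by simp
    show "insert 0 ((\<lambda>i. (\<Sum>k\<in>{k. k < m \<and> g' k = i}. psum p (B k)) / s i) ` {..<m}) \<noteq> {}" by simp
    fix a assume "a \<in> insert 0 ((\<lambda>i. (\<Sum>k\<in>{k. k < m \<and> g' k = i}. psum p (B k)) / s i) ` {..<m})"
    then consider "a = 0" | i where "i<m" "a = (\<Sum>k\<in>{k. k < m \<and> g' k = i}. psum p (B k)) / s i" by auto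
    then show "a \<le> \<gamma> * T"
    proof cases
      case 1 then show ?thesis using g2 T0 by simp
    next
      case 2
      have "{k. k < m \<and> g' k = i} = {k. k\<in>{..<m} \<and> g k = i}" unfolding g'_def by auto
      then have "(\<Sum>k\<in>{k. k < m \<and> g' k = i}. psum p (B k)) \<le> \<gamma> * T * s i" using gL 2 by simp
      then show ?thesis using 2 spos by (simp add: divide_le_eq)
    qed
  qed
  ultimately show ?thesis by blast
qed

end

end

lemma opt_exists:
  fixes n m :: nat and p :: "nat \<Rightarrow> real" and B :: "nat \<Rightarrow> nat set" and s :: "nat \<Rightarrow> real"
  assumes part: "is_partition n m B" and spos: "\<forall>i<m. s i > 0"
  shows "\<exists>f. (\<forall>j<n. f j < m) \<and> (\<forall>i<m. (\<Sum>j\<in>{j. j<n \<and> f j = i}. p j) \<le> opt n m p s * s i)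
           \<and> opt n m p s \<ge> 0"
proof -
  define F where "F = {..<n} \<rightarrow>\<^sub>E {..<m}"
  have "m = 0 \<Longrightarrow> n = 0" using part unfolding is_partition_def by auto
  then have Fne: "F \<noteq> {}" unfolding F_def by (auto simp: PiE_eq_empty_iff)
  have finF: "finite F" unfolding F_def by (simp add: finite_PiE)
  have "opt n m p s \<in> makespan n m p s ` F"
    unfolding opt_def F_def[symmetric] using Fne finF by (intro Min_in) auto
  then obtain f where f: "f \<in> F" "opt n m p s = makespan n m p s f" by auto
  have fm: "\<forall>j<n. f j < m" using f(1) unfolding F_def by auto
  have fin: "finite (insert 0 ((\<lambda>i. (\<Sum>j\<in>{j. j < n \<and> f j = i}. p j) / s i) ` {..<m}))" by simp
  have "opt n m p s \<ge> 0" unfolding f(2) makespan_def using fin by (intro Max_ge) auto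
  moreover have "(\<Sum>j\<in>{j. j<n \<and> f j = i}. p j) \<le> opt n m p s * s i" if i: "i<m" for i
  proof -
    have "(\<Sum>j\<in>{j. j<n \<and> f j = i}. p j) / s i \<le> opt n m p s"
      unfolding f(2) makespan_def using fin i by (intro Max_ge) auto
    then show ?thesis using spos i by (simp add: divide_le_eq)
  qed
  ultimately show ?thesis using fm by blast
qed

theorem lemma2:
  fixes n m :: nat and p :: "nat \<Rightarrow> real" and B :: "nat \<Rightarrow> nat set"
  assumes "\<forall>j<n. p j \<ge> 0"
    and "is_partition n m B"
  shows "robust n m p B (max 2 (beta m p B))"
  unfolding robust_def
proof (intro allI impI)
  fix s :: "nat \<Rightarrow> real"
  assume spos: "\<forall>i<m. s i > 0"
  define T where "T = opt n m p s"
  obtain f where fm: "\<forall>j<n. f j < m"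
    and fT: "\<forall>i<m. (\<Sum>j\<in>{j. j<n \<and> f j = i}. p j) \<le> T * s i" and T0: "T \<ge> 0"
    using opt_exists[OF assms(2) spos, of p] unfolding T_def by blast
  have psnn: "k<m \<Longrightarrow> psum p (B k) \<ge> 0" for k
    using assms unfolding psum_def is_partition_def by (intro sum_nonneg) auto
  show "\<exists>g\<in>{..<m} \<rightarrow>\<^sub>E {..<m}. ereal (bag_makespan m p B s g) \<le> max 2 (beta m p B) * ereal T"
    unfolding T_def[symmetric]
  proof (cases "max 2 (beta m p B) = \<infinity>")
    case inf: True
    show ?thesis
    proof (cases "T > 0")
      case True
      have "restrict (\<lambda>_. 0) {..<m} \<in> {..<m} \<rightarrow>\<^sub>E {..<m}" by auto
      then show ?thesis using True inf by (intro bexI[of _ "restrict (\<lambda>_. 0) {..<m}"]) auto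
    next
      case False
      then have T00: "T = 0" using T0 by simp
      have "(\<Sum>j<n. p j) \<le> 0"
        using volume[OF assms(1,2) spos fm fT T0] T00 by simp
      moreover have "(\<Sum>j<n. p j) \<ge> 0" using assms(1) by (intro sum_nonneg) auto
      ultimately have "(\<Sum>j<n. p j) = 0" by simp
      then have pz: "\<forall>j<n. p j = 0"
        using assms(1) sum_nonneg_eq_0_iff[of "{..<n}" p] by auto
      have pz2: "k<m \<Longrightarrow> psum p (B k) = 0" for k
        using pz assms(2) unfolding psum_def is_partition_def by (intro sum.neutral) auto
      have H: "\<forall>k<m. \<forall>l<m. card (B k) \<ge> 2 \<longrightarrow> psum p (B k) \<le> 2 * psum p (B l)"
        using pz2 by simp
      obtain g where "g\<in>{..<m} \<rightarrow>\<^sub>E {..<m}" "bag_makespan m p B s g \<le> 2 * T"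
        using main_assign[OF assms(1,2) spos fm fT T0 _ H] by auto
      note gg = this
      have z: "max 2 (beta m p B) * ereal T = 0" unfolding T00 by simp
      have "bag_makespan m p B s g \<le> 0" using gg(2) T00 by simp
      then have "ereal (bag_makespan m p B s g) \<le> 0" by simp
      then have "ereal (bag_makespan m p B s g) \<le> max 2 (beta m p B) * ereal T" unfolding z .
      then show ?thesis using gg(1) by (rule bexI[of _ g])
    qed
  next
    case False
    have m2: "ereal 2 \<le> max 2 (beta m p B)" by simp
    obtain \<gamma> where ge: "max 2 (beta m p B) = ereal \<gamma>"
      by (cases "max 2 (beta m p B)") (use False m2 in auto)
    have g2: "\<gamma> \<ge> 2" using ge m2 by simp
    have H: "\<forall>k<m. \<forall>l<m. card (B k) \<ge> 2 \<longrightarrow> psum p (B k) \<le> \<gamma> * psum p (B l)"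
    proof (intro allI impI)
      fix k l assume k: "k<m" and l: "l<m" and ck: "card (B k) \<ge> 2"
      define M where "M = {k. k < m \<and> card (B k) \<ge> 2}"
      define mn where "mn = Min (psum p ` B ` {..<m})"
      have kM: "k \<in> M" using k ck unfolding M_def by auto
      have Mne: "M \<noteq> {}" using kM by auto
      have mnl: "mn \<le> psum p (B l)" unfolding mn_def using l by (intro Min_le) auto
      have mn0: "mn \<ge> 0"
      proof -
        have "mn \<in> psum p ` B ` {..<m}" unfolding mn_def using l by (intro Min_in) auto
        then show ?thesis using psnn by auto
      qed
      have mnne: "mn \<noteq> 0"
      proof
        assume "mn = 0"
        then have "beta m p B = \<infinity>" unfolding beta_def Let_def M_def[symmetric] mn_def[symmetric]
          using Mne by simp
        then show False using ge by simp
      qed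
      have bet: "beta m p B = ereal (Max (psum p ` B ` M) / mn)"
        unfolding beta_def Let_def M_def[symmetric] mn_def[symmetric] using Mne mnne by simp
      have "ereal (Max (psum p ` B ` M) / mn) \<le> max 2 (ereal (Max (psum p ` B ` M) / mn))"
        by (rule max.cobounded2)
      also have "\<dots> = ereal \<gamma>" using ge bet by simp
      finally have "Max (psum p ` B ` M) / mn \<le> \<gamma>" by simp
      have kmax: "psum p (B k) \<le> Max (psum p ` B ` M)"
        using kM unfolding M_def by (intro Max_ge) auto
      have "psum p (B k) \<le> (Max (psum p ` B ` M) / mn) * mn" using kmax mnne by simp
      also have "\<dots> \<le> \<gamma> * mn" using \<open>Max (psum p ` B ` M) / mn \<le> \<gamma>\<close> mn0 by (intro mult_right_mono)
      also have "\<dots> \<le> \<gamma> * psum p (B l)" using mnl g2 by (intro mult_left_mono) auto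
      finally show "psum p (B k) \<le> \<gamma> * psum p (B l)" .
    qed
    obtain g where "g\<in>{..<m} \<rightarrow>\<^sub>E {..<m}" "bag_makespan m p B s g \<le> \<gamma> * T"
      using main_assign[OF assms(1,2) spos fm fT T0 g2 H] by auto
    then show ?thesis using ge by (intro bexI[of _ g]) auto
  qed
qed


end
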